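(* Let $X$ and $Y$ be metric spaces and $\mathcal F\subseteq Y^X$. (1) If $\mathcal F$ has (PECP), then $\mathcal F$ is equi-Baire 1. (2) If $X$ is hereditarily Baire, then $\mathcal F$ is equi-Baire 1 if and only if $\mathcal F$ has (PECP).
   Context: Let $(X,\rho)$, $(Y,d)$ be metric spaces. $\mathcal F\subseteq Y^X$ is equi-Baire 1 if for every $\varepsilon>0$ there is $\delta_\varepsilon\colon X\to(0,\infty)$ such that for all $x,y\in X$ and all $f\in\mathcal F$, $\rho(x,y)<\min\{\delta_\varepsilon(x),\delta_\varepsilon(y)\}$ implies $d(f(x),f(y))<\varepsilon$. $\mathcal F$ has (PECP) if for every nonempty closed $F\subseteq X$ the family $\{f|_F:f\in\mathcal F\}$ has a point of equicontinuity, i.e. a point $x\in F$ such that for every $\varepsilon>0$ there is a neighborhood $U$ of $x$ with $d(f(x'),f(x))<\varepsilon$ for all $x'\in U\cap F$ and $f\in\mathcal F$. A space is hereditarily Baire if every nonempty closed subspace is a Baire space (every nonempty open subset nonmeager in itself). *)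

theory Defs
  imports "HOL-Analysis.Analysis"
begin

definition equi_Baire1 :: "('a::metric_space \<Rightarrow> 'b::metric_space) set \<Rightarrow> bool" where
  "equi_Baire1 F \<longleftrightarrow>
     (\<forall>\<epsilon>>0. \<exists>\<delta>::'a \<Rightarrow> real. (\<forall>x. \<delta> x > 0) \<and>
        (\<forall>x y. \<forall>f\<in>F. dist x y < min (\<delta> x) (\<delta> y) \<longrightarrow> dist (f x) (f y) < \<epsilon>))"

definition equicont_point_on :: "('a::metric_space \<Rightarrow> 'b::metric_space) set \<Rightarrow> 'a set \<Rightarrow> 'a \<Rightarrow> bool" where
  "equicont_point_on F S x \<longleftrightarrow> x \<in> S \<and>
     (\<forall>\<epsilon>>0. \<exists>U. open U \<and> x \<in> U \<and> (\<forall>x'\<in>U \<inter> S. \<forall>f\<in>F. dist (f x') (f x) < \<epsilon>))"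

definition PECP :: "('a::metric_space \<Rightarrow> 'b::metric_space) set \<Rightarrow> bool" where
  "PECP F \<longleftrightarrow> (\<forall>S. closed S \<and> S \<noteq> {} \<longrightarrow> (\<exists>x. equicont_point_on F S x))"

definition nowhere_dense_in :: "'a topology \<Rightarrow> 'a set \<Rightarrow> bool" where
  "nowhere_dense_in T A \<longleftrightarrow> A \<subseteq> topspace T \<and> T interior_of (T closure_of A) = {}"

definition meager_in :: "'a topology \<Rightarrow> 'a set \<Rightarrow> bool" where
  "meager_in T A \<longleftrightarrow> A \<subseteq> topspace T \<and>
     (\<exists>N::nat \<Rightarrow> 'a set. (\<forall>n. nowhere_dense_in T (N n)) \<and> A \<subseteq> (\<Union>n. N n))"

definition Baire_space :: "'a topology \<Rightarrow> bool" where
  "Baire_space T \<longleftrightarrow> (\<forall>U. openin T U \<and> U \<noteq> {} \<longrightarrow> \<not> meager_in T U)"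

definition hereditarily_Baire :: "'a::topological_space itself \<Rightarrow> bool" where
  "hereditarily_Baire _ \<longleftrightarrow> (\<forall>S::'a set. closed S \<and> S \<noteq> {} \<longrightarrow> Baire_space (top_of_set S))"

end

theory Submission
  imports Defs
begin


inductive_set dtower :: "('a set \<Rightarrow> 'a set) \<Rightarrow> 'a set set" for D where
  tD: "S \<in> dtower D \<Longrightarrow> D S \<in> dtower D"
| tI: "(\<And>S. S \<in> M \<Longrightarrow> S \<in> dtower D) \<Longrightarrow> \<Inter>M \<in> dtower D"

lemma dtower_lemma1:
  assumes sub: "\<And>S. D S \<subseteq> S"
    and good: "\<forall>B\<in>dtower D. A \<subseteq> B \<longrightarrow> B = A \<or> A \<subseteq> D B"
    and B: "B \<in> dtower D"
  shows "A \<subseteq> B \<or> B \<subseteq> D A"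
  using B
proof (induction B rule: dtower.induct)
  case (tD C)
  then show ?case using good sub by blast
next
  case (tI M)
  show ?case
  proof (cases "\<forall>C\<in>M. A \<subseteq> C")
    case True then show ?thesis by blast
  next
    case False
    then obtain C where "C \<in> M" "\<not> A \<subseteq> C" by blast
    with tI have "C \<subseteq> D A" by blast
    with \<open>C \<in> M\<close> show ?thesis by blast
  qed
qed

lemma dtower_good:
  assumes sub: "\<And>S. D S \<subseteq> S"
    and A: "A \<in> dtower D"
  shows "\<forall>B\<in>dtower D. A \<subseteq> B \<longrightarrow> B = A \<or> A \<subseteq> D B"
  using A
proof (induction A rule: dtower.induct)
  case (tD C)
  show ?case
  proof (intro ballI impI)
    fix B assume B: "B \<in> dtower D" "D C \<subseteq> B"
    from dtower_lemma1[OF sub tD.IH B(1)] have "C \<subseteq> B \<or> B \<subseteq> D C" .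
    then show "B = D C \<or> D C \<subseteq> D B"
    proof
      assume "C \<subseteq> B"
      with tD.IH B(1) have "B = C \<or> C \<subseteq> D B" by blast
      then show ?thesis using sub[of C] by blast
    next
      assume "B \<subseteq> D C" with B(2) show ?thesis by blast
    qed
  qed
next
  case (tI M)
  show ?case
  proof (intro ballI impI)
    fix B assume B: "B \<in> dtower D" "\<Inter>M \<subseteq> B"
    show "B = \<Inter>M \<or> \<Inter>M \<subseteq> D B"
    proof (cases "\<exists>C\<in>M. C \<subset> B")
      case True
      then obtain C where C: "C \<in> M" "C \<subset> B" by blast
      with tI B(1) have "C \<subseteq> D B" by blast
      with C(1) show ?thesis by blast
    next
      case False
      have "B \<subseteq> C" if C: "C \<in> M" for C
      proof -
        from C tI have "C \<in> dtower D" "\<forall>B\<in>dtower D. C \<subseteq> B \<longrightarrow> B = C \<or> C \<subseteq> D B" by blast+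
        from dtower_lemma1[OF sub this(2) B(1)] have "C \<subseteq> B \<or> B \<subseteq> D C" .
        then show ?thesis using False C sub[of C] by blast
      qed
      with B(2) show ?thesis by blast
    qed
  qed
qed

lemma dtower_total:
  assumes sub: "\<And>S. D S \<subseteq> S" and "A \<in> dtower D" "B \<in> dtower D"
  shows "A \<subseteq> B \<or> B \<subseteq> D A"
  using dtower_lemma1[OF sub dtower_good[OF sub assms(2)] assms(3)] .


lemma part1:
  fixes F :: "('a::metric_space \<Rightarrow> 'b::metric_space) set"
  assumes P: "PECP F" and e: "\<epsilon> > 0"
  shows "\<exists>\<delta>::'a \<Rightarrow> real. (\<forall>x. \<delta> x > 0) \<and>
        (\<forall>x y. \<forall>f\<in>F. dist x y < min (\<delta> x) (\<delta> y) \<longrightarrow> dist (f x) (f y) < \<epsilon>)"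
proof -
  define U where "U S = {x. \<exists>V. open V \<and> x \<in> V \<and> (\<forall>a\<in>V\<inter>S. \<forall>b\<in>V\<inter>S. \<forall>f\<in>F. dist (f a) (f b) < \<epsilon>)}" for S
  define D where "D S = S - U S" for S
  have sub: "\<And>S. D S \<subseteq> S" unfolding D_def by blast
  have openU: "open (U S)" for S
    unfolding open_subopen[of "U S"]
  proof
    fix x assume "x \<in> U S"
    then obtain V where "open V" "x \<in> V" "\<forall>a\<in>V\<inter>S. \<forall>b\<in>V\<inter>S. \<forall>f\<in>F. dist (f a) (f b) < \<epsilon>"
      unfolding U_def by blast
    moreover have "V \<subseteq> U S" using calculation unfolding U_def by blast
    ultimately show "\<exists>T. open T \<and> x \<in> T \<and> T \<subseteq> U S" by blast
  qed
  have closedT: "S \<in> dtower D \<Longrightarrow> closed S" for S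
  proof (induction S rule: dtower.induct)
    case (tD S) then show ?case unfolding D_def using openU by (simp add: closed_Diff)
  next
    case (tI M) then show ?case by blast
  qed
  define A where "A x = \<Inter>{S\<in>dtower D. x \<in> S}" for x
  have AT: "A x \<in> dtower D" for x unfolding A_def by (rule dtower.tI) blast
  have xA: "x \<in> A x" for x unfolding A_def by blast
  have xU: "x \<in> U (A x)" for x
  proof (rule ccontr)
    assume "x \<notin> U (A x)"
    then have "x \<in> D (A x)" using xA unfolding D_def by blast
    moreover have "D (A x) \<in> dtower D" using AT by (rule dtower.tD)
    ultimately have "A x \<subseteq> D (A x)" unfolding A_def by blast
    then have dis: "A x \<inter> U (A x) = {}" unfolding D_def by blast
    have "closed (A x)" "A x \<noteq> {}" using closedT[OF AT] xA by blast+
    with P obtain z where z: "equicont_point_on F (A x) z" unfolding PECP_def by blast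
    then obtain W where W: "open W" "z \<in> W" "\<forall>x'\<in>W \<inter> A x. \<forall>f\<in>F. dist (f x') (f z) < \<epsilon>/2"
      unfolding equicont_point_on_def using e by (meson half_gt_zero)
    have "\<forall>a\<in>W\<inter>A x. \<forall>b\<in>W\<inter>A x. \<forall>f\<in>F. dist (f a) (f b) < \<epsilon>"
      using W(3) dist_triangle_half_l by blast
    then have "z \<in> U (A x)" unfolding U_def using W(1,2) by blast
    moreover have "z \<in> A x" using z unfolding equicont_point_on_def by blast
    ultimately show False using dis by blast
  qed
  have "\<forall>x. \<exists>d. d > 0 \<and> (\<exists>V. open V \<and> ball x d \<subseteq> V \<and> x \<in> V \<and>
          (\<forall>a\<in>V\<inter>A x. \<forall>b\<in>V\<inter>A x. \<forall>f\<in>F. dist (f a) (f b) < \<epsilon>))"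
  proof
    fix x
    from xU[of x] obtain V where V: "open V" "x \<in> V" "\<forall>a\<in>V\<inter>A x. \<forall>b\<in>V\<inter>A x. \<forall>f\<in>F. dist (f a) (f b) < \<epsilon>"
      unfolding U_def by blast
    then obtain d where "d > 0" "ball x d \<subseteq> V" using open_contains_ball by blast
    with V show "\<exists>d. d > 0 \<and> (\<exists>V. open V \<and> ball x d \<subseteq> V \<and> x \<in> V \<and>
          (\<forall>a\<in>V\<inter>A x. \<forall>b\<in>V\<inter>A x. \<forall>f\<in>F. dist (f a) (f b) < \<epsilon>))" by blast
  qed
  then obtain \<delta> where \<delta>: "\<And>x. \<delta> x > 0" "\<And>x. \<exists>V. open V \<and> ball x (\<delta> x) \<subseteq> V \<and> x \<in> V \<and>
          (\<forall>a\<in>V\<inter>A x. \<forall>b\<in>V\<inter>A x. \<forall>f\<in>F. dist (f a) (f b) < \<epsilon>)"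
    by metis
  have key: "dist (f x) (f y) < \<epsilon>" if "f \<in> F" "dist x y < \<delta> x" "y \<in> A x" for f x y
  proof -
    from \<delta>(2)[of x] obtain V where V: "ball x (\<delta> x) \<subseteq> V" "x \<in> V"
      "\<forall>a\<in>V\<inter>A x. \<forall>b\<in>V\<inter>A x. \<forall>f\<in>F. dist (f a) (f b) < \<epsilon>" by blast
    have "y \<in> V" using V(1) that(2) by auto
    then show ?thesis using V(2,3) that xA[of x] by blast
  qed
  show ?thesis
  proof (intro exI conjI allI ballI impI)
    fix x y f assume f: "f \<in> F" and d: "dist x y < min (\<delta> x) (\<delta> y)"
    have "A x \<subseteq> A y \<or> A y \<subseteq> A x" using dtower_total[OF sub AT AT, of x y] sub[of "A x"] by blast
    then show "dist (f x) (f y) < \<epsilon>"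
    proof
      assume "A y \<subseteq> A x"
      then show ?thesis using key[OF f, of x y] d xA[of y] by auto
    next
      assume "A x \<subseteq> A y"
      then have "dist (f y) (f x) < \<epsilon>" using key[OF f, of y x] d xA[of x] by (auto simp: dist_commute)
      then show ?thesis by (simp add: dist_commute)
    qed
  qed (use \<delta> in auto)
qed


lemma part2:
  fixes F :: "('a::metric_space \<Rightarrow> 'b::metric_space) set"
  assumes hB: "hereditarily_Baire TYPE('a)" and eb: "equi_Baire1 F"
    and S: "closed S" "S \<noteq> {}"
  shows "\<exists>x. equicont_point_on F S x"
proof -
  have "\<forall>n::nat. \<exists>\<delta>::'a \<Rightarrow> real. (\<forall>x. \<delta> x > 0) \<and>
        (\<forall>x y. \<forall>f\<in>F. dist x y < min (\<delta> x) (\<delta> y) \<longrightarrow> dist (f x) (f y) < 1 / Suc n)"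
    using eb unfolding equi_Baire1_def by simp
  then obtain \<delta> :: "nat \<Rightarrow> 'a \<Rightarrow> real" where \<delta>pos: "\<And>n x. \<delta> n x > 0"
    and \<delta>: "\<And>n x y f. f \<in> F \<Longrightarrow> dist x y < min (\<delta> n x) (\<delta> n y) \<Longrightarrow> dist (f x) (f y) < 1 / Suc n"
    by metis
  have Bai: "Baire_space (top_of_set S)" using hB S unfolding hereditarily_Baire_def by blast
  define Og where "Og n = {x. \<exists>V. open V \<and> x \<in> V \<and> (\<forall>a\<in>V\<inter>S. \<forall>b\<in>V\<inter>S. \<forall>f\<in>F. dist (f a) (f b) < 3 / Suc n)}" for n :: nat
  have openOg: "open (Og n)" for n
    unfolding open_subopen[of "Og n"]
  proof
    fix x assume "x \<in> Og n"
    then obtain V where "open V" "x \<in> V" "\<forall>a\<in>V\<inter>S. \<forall>b\<in>V\<inter>S. \<forall>f\<in>F. dist (f a) (f b) < 3 / Suc n"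
      unfolding Og_def by blast
    moreover have "V \<subseteq> Og n" using calculation unfolding Og_def by blast
    ultimately show "\<exists>T. open T \<and> x \<in> T \<and> T \<subseteq> Og n" by blast
  qed
  have nd: "nowhere_dense_in (top_of_set S) (S - Og n)" for n
  proof -
    have cl: "closedin (top_of_set S) (S - Og n)"
      unfolding closedin_closed using openOg[of n] by (intro exI[of _ "- Og n"]) (auto simp: closed_def)
    have "top_of_set S interior_of (S - Og n) = {}"
    proof (rule ccontr)
      assume "top_of_set S interior_of (S - Og n) \<noteq> {}"
      then obtain W where W: "openin (top_of_set S) W" "W \<noteq> {}" "W \<subseteq> S - Og n"
        unfolding interior_of_def by blast
      have nm: "\<not> meager_in (top_of_set S) W" using Bai W unfolding Baire_space_def by blast
      define Sk where "Sk k = W \<inter> {x. \<delta> n x \<ge> 1 / Suc k}" for k :: nat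
      have cover: "W \<subseteq> (\<Union>k. Sk k)"
      proof
        fix x assume "x \<in> W"
        obtain k where "inverse (real (Suc k)) < \<delta> n x" using reals_Archimedean \<delta>pos by blast
        then have "1 / Suc k \<le> \<delta> n x" by (simp add: field_simps)
        then show "x \<in> (\<Union>k. Sk k)" using \<open>x \<in> W\<close> unfolding Sk_def by blast
      qed
      have WS: "W \<subseteq> S" using W by blast
      obtain k where k: "\<not> nowhere_dense_in (top_of_set S) (Sk k)"
        using nm cover WS unfolding meager_in_def by (metis topspace_euclidean_subtopology)
      then have "top_of_set S interior_of (top_of_set S closure_of (Sk k)) \<noteq> {}"
        unfolding nowhere_dense_in_def Sk_def using WS by auto
      then obtain G p where G: "openin (top_of_set S) G" "p \<in> G" "G \<subseteq> top_of_set S closure_of (Sk k)"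
        unfolding interior_of_def by blast
      then have "p \<in> top_of_set S closure_of (Sk k)" by blast
      then obtain q where q: "q \<in> Sk k" "q \<in> G" using G(1,2) unfolding in_closure_of by blast
      from G(1) obtain UG where UG: "open UG" "G = S \<inter> UG" unfolding openin_open by blast
      define r where "r = 1 / (2 * Suc k)"
      have r: "r > 0" unfolding r_def by simp
      define V where "V = UG \<inter> ball q r"
      have qV: "q \<in> V" using q UG r unfolding V_def by auto
      have approx: "\<exists>a'\<in>Sk k. a' \<in> V \<and> dist a a' < \<delta> n a" if a: "a \<in> V \<inter> S" for a
      proof -
        have "a \<in> G" using a UG(2) unfolding V_def by simp
        then have "a \<in> top_of_set S closure_of (Sk k)" by (rule subsetD[OF G(3)])
        then have cl: "\<And>T. a \<in> T \<Longrightarrow> openin (top_of_set S) T \<Longrightarrow> \<exists>y. y \<in> Sk k \<and> y \<in> T"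
          unfolding in_closure_of by blast
        have "open (UG \<inter> ball q r \<inter> ball a (\<delta> n a))" using UG(1) by (intro open_Int open_ball)
        moreover have "S \<inter> (V \<inter> ball a (\<delta> n a)) = S \<inter> (UG \<inter> ball q r \<inter> ball a (\<delta> n a))"
          unfolding V_def by (simp only: Int_assoc)
        ultimately have "openin (top_of_set S) (S \<inter> (V \<inter> ball a (\<delta> n a)))"
          unfolding openin_open by blast
        moreover have "a \<in> S \<inter> (V \<inter> ball a (\<delta> n a))" using a \<delta>pos[of n a] by simp
        ultimately obtain a' where "a' \<in> Sk k" "a' \<in> S \<inter> (V \<inter> ball a (\<delta> n a))"
          using cl[of "S \<inter> (V \<inter> ball a (\<delta> n a))"] by blast
        then show ?thesis by (metis IntD1 IntD2 mem_ball dist_commute)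
      qed
      have "q \<in> Og n"
        unfolding Og_def
      proof (intro CollectI exI[of _ V] conjI ballI)
        show "open V" unfolding V_def using UG by auto
        show "q \<in> V" by fact
        fix a b f assume a: "a \<in> V \<inter> S" and b: "b \<in> V \<inter> S" and f: "f \<in> F"
        obtain a' where a': "a' \<in> Sk k" "a' \<in> V" "dist a a' < \<delta> n a" using approx[OF a] by blast
        obtain b' where b': "b' \<in> Sk k" "b' \<in> V" "dist b b' < \<delta> n b" using approx[OF b] by blast
        have "dist a' b' \<le> dist a' q + dist b' q" by (rule dist_triangle2)
        also have "\<dots> < r + r" using a'(2) b'(2) unfolding V_def mem_ball by (simp add: dist_commute add_strict_mono)
        also have "r + r = 1 / Suc k" unfolding r_def by (simp add: field_simps)
        finally have "dist a' b' < 1 / Suc k" .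
        moreover have "1 / Suc k \<le> \<delta> n a'" "1 / Suc k \<le> \<delta> n b'" using a'(1) b'(1) unfolding Sk_def by auto
        ultimately have 1: "dist (f a') (f b') < 1 / Suc n" using \<delta>[OF f, of a' b'] by simp
        have "dist a a' < \<delta> n a'"
        proof -
          have "dist a a' \<le> dist a q + dist a' q" by (rule dist_triangle2)
          also have "\<dots> < r + r" using a a'(2) unfolding V_def mem_ball by (simp add: dist_commute add_strict_mono)
          also have "r + r = 1 / Suc k" unfolding r_def by (simp add: field_simps)
          finally show ?thesis using a'(1) unfolding Sk_def by auto
        qed
        then have 2: "dist (f a) (f a') < 1 / Suc n" using \<delta>[OF f, of a a'] a'(3) by simp
        have "dist b b' < \<delta> n b'"
        proof -
          have "dist b b' \<le> dist b q + dist b' q" by (rule dist_triangle2)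
          also have "\<dots> < r + r" using b b'(2) unfolding V_def mem_ball by (simp add: dist_commute add_strict_mono)
          also have "r + r = 1 / Suc k" unfolding r_def by (simp add: field_simps)
          finally show ?thesis using b'(1) unfolding Sk_def by auto
        qed
        then have 3: "dist (f b) (f b') < 1 / Suc n" using \<delta>[OF f, of b b'] b'(3) by simp
        have "dist (f a) (f b) \<le> dist (f a) (f a') + dist (f a') (f b') + dist (f b) (f b')"
          using dist_triangle[of "f a" "f b" "f a'"] dist_triangle[of "f a'" "f b" "f b'"] dist_commute[of "f b'" "f b"] by linarith
        also have "\<dots> < 1 / Suc n + 1 / Suc n + 1 / Suc n" using 1 2 3 by linarith
        also have "\<dots> = 3 / Suc n" by simp
        finally show "dist (f a) (f b) < 3 / Suc n" .
      qed
      moreover have "q \<in> W" using q unfolding Sk_def by blast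
      ultimately show False using W(3) by blast
    qed
    then show ?thesis unfolding nowhere_dense_in_def using closure_of_closedin[OF cl] by auto
  qed
  obtain x where x: "x \<in> S" "\<And>n. x \<in> Og n"
  proof (rule ccontr)
    assume "\<not> thesis"
    with that have "S \<subseteq> (\<Union>n. S - Og n)" by blast
    then have "meager_in (top_of_set S) S" unfolding meager_in_def using nd
      by (intro conjI exI[of _ "\<lambda>n. S - Og n"]) auto
    moreover have "openin (top_of_set S) S" by simp
    ultimately show False using Bai S(2) unfolding Baire_space_def by blast
  qed
  have "equicont_point_on F S x"
    unfolding equicont_point_on_def
  proof (intro conjI allI impI)
    show "x \<in> S" by fact
    fix e :: real assume e: "e > 0"
    obtain n where n: "inverse (real (Suc n)) < e / 3" using reals_Archimedean e
      by (metis divide_pos_pos zero_less_numeral)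
    then have n': "3 / Suc n < e" by (simp add: field_simps)
    from x(2)[of n] obtain V where V: "open V" "x \<in> V" "\<forall>a\<in>V\<inter>S. \<forall>b\<in>V\<inter>S. \<forall>f\<in>F. dist (f a) (f b) < 3 / Suc n"
      unfolding Og_def by blast
    show "\<exists>U. open U \<and> x \<in> U \<and> (\<forall>x'\<in>U \<inter> S. \<forall>f\<in>F. dist (f x') (f x) < e)"
      using V x(1) n' by (intro exI[of _ V]) (meson IntI less_trans)
  qed
  then show ?thesis by blast
qed

theorem proposition3p5:
  fixes F :: "('a::metric_space \<Rightarrow> 'b::metric_space) set"
  shows "(PECP F \<longrightarrow> equi_Baire1 F) \<and>
         (hereditarily_Baire TYPE('a) \<longrightarrow> (equi_Baire1 F \<longleftrightarrow> PECP F))"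
proof -
  have 1: "PECP F \<longrightarrow> equi_Baire1 F"
    using part1[of F] unfolding equi_Baire1_def by blast
  have "hereditarily_Baire TYPE('a) \<Longrightarrow> equi_Baire1 F \<Longrightarrow> PECP F"
    using part2[of F] unfolding PECP_def by blast
  with 1 show ?thesis by blast
qed

end
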